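(* Let $A$ be a commutative Noetherian ring of Krull dimension $d\geq 1$ and let $s$ be a non-zero-divisor of $A$. Then the generalized dimension of the localization $A_{1+sA}$ is $\leq d-1$.
   Context: Let $B$ be a commutative ring. For a function $\delta:\mathrm{Spec}(B)\to\mathbb{N}\cup\{0\}$, define a partial order on $\mathrm{Spec}(B)$ by $\mathfrak p\ll\mathfrak q$ if $\mathfrak p\subset\mathfrak q$ and $\delta(\mathfrak p)>\delta(\mathfrak q)$. Such a $\delta$ is a generalized dimension function if for every ideal $J$ of $B$, the set $V(J)$ has only finitely many minimal elements with respect to $\ll$. The generalized dimension of $B$ is the minimum, over all generalized dimension functions $\delta$ on $\mathrm{Spec}(B)$, of $\max_{\mathfrak p\in\mathrm{Spec}(B)}\delta(\mathfrak p)$. Here $A_{1+sA}$ denotes the localization of $A$ at the multiplicative set $1+sA$. *)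

theory Defs
  imports "HOL-Algebra.Algebra" "HOL-Library.Extended_Nat"
begin

definition Spec :: "('a, 'm) ring_scheme \<Rightarrow> 'a set set" where
  "Spec R = {P. primeideal P R}"

definition V_set :: "('a, 'm) ring_scheme \<Rightarrow> 'a set \<Rightarrow> 'a set set" where
  "V_set R J = {P \<in> Spec R. J \<subseteq> P}"

definition krull_dim :: "('a, 'm) ring_scheme \<Rightarrow> enat" where
  "krull_dim R = (SUP n \<in> {n. \<exists>c :: nat \<Rightarrow> 'a set.
       (\<forall>i\<le>n. c i \<in> Spec R) \<and> (\<forall>i<n. c i \<subset> c (Suc i))}. enat n)"

definition non_zero_divisor :: "('a, 'm) ring_scheme \<Rightarrow> 'a \<Rightarrow> bool" where
  "non_zero_divisor R s \<longleftrightarrow> s \<in> carrier R \<and>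
     (\<forall>a \<in> carrier R. s \<otimes>\<^bsub>R\<^esub> a = \<zero>\<^bsub>R\<^esub> \<longrightarrow> a = \<zero>\<^bsub>R\<^esub>)"

definition loc_rel :: "('a, 'm) ring_scheme \<Rightarrow> 'a set \<Rightarrow> (('a \<times> 'a) \<times> ('a \<times> 'a)) set" where
  "loc_rel R S = {((a, u), (b, v)). a \<in> carrier R \<and> u \<in> S \<and> b \<in> carrier R \<and> v \<in> S \<and>
      (\<exists>t \<in> S. t \<otimes>\<^bsub>R\<^esub> ((a \<otimes>\<^bsub>R\<^esub> v) \<ominus>\<^bsub>R\<^esub> (b \<otimes>\<^bsub>R\<^esub> u)) = \<zero>\<^bsub>R\<^esub>)}"

text \<open>Elements are equivalence classes of fractions a/u; operations are computed on
  (arbitrarily chosen) representatives.\<close>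
definition loc_mult :: "('a, 'm) ring_scheme \<Rightarrow> 'a set \<Rightarrow> ('a \<times> 'a) set \<Rightarrow> ('a \<times> 'a) set \<Rightarrow> ('a \<times> 'a) set" where
  "loc_mult R S U W = (let p = (SOME p. p \<in> U); q = (SOME q. q \<in> W) in
         loc_rel R S `` {(fst p \<otimes>\<^bsub>R\<^esub> fst q, snd p \<otimes>\<^bsub>R\<^esub> snd q)})"

definition loc_add :: "('a, 'm) ring_scheme \<Rightarrow> 'a set \<Rightarrow> ('a \<times> 'a) set \<Rightarrow> ('a \<times> 'a) set \<Rightarrow> ('a \<times> 'a) set" where
  "loc_add R S U W = (let p = (SOME p. p \<in> U); q = (SOME q. q \<in> W) in
         loc_rel R S `` {((fst p \<otimes>\<^bsub>R\<^esub> snd q) \<oplus>\<^bsub>R\<^esub> (fst q \<otimes>\<^bsub>R\<^esub> snd p),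
                          snd p \<otimes>\<^bsub>R\<^esub> snd q)})"

definition localization :: "('a, 'm) ring_scheme \<Rightarrow> 'a set \<Rightarrow> ('a \<times> 'a) set ring" where
  "localization R S =
    \<lparr>carrier = (carrier R \<times> S) // loc_rel R S,
     monoid.mult = loc_mult R S,
     one = loc_rel R S `` {(\<one>\<^bsub>R\<^esub>, \<one>\<^bsub>R\<^esub>)},
     ring.zero = loc_rel R S `` {(\<zero>\<^bsub>R\<^esub>, \<one>\<^bsub>R\<^esub>)},
     ring.add = loc_add R S\<rparr>"

definition one_plus :: "('a, 'm) ring_scheme \<Rightarrow> 'a \<Rightarrow> 'a set" where
  "one_plus R s = {\<one>\<^bsub>R\<^esub> \<oplus>\<^bsub>R\<^esub> (s \<otimes>\<^bsub>R\<^esub> a) | a. a \<in> carrier R}"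

definition gd_less :: "('b set \<Rightarrow> nat) \<Rightarrow> 'b set \<Rightarrow> 'b set \<Rightarrow> bool" where
  "gd_less \<delta> p q \<longleftrightarrow> p \<subset> q \<and> \<delta> p > \<delta> q"

definition gd_minimal :: "('b set \<Rightarrow> nat) \<Rightarrow> 'b set set \<Rightarrow> 'b set set" where
  "gd_minimal \<delta> U = {p \<in> U. \<not> (\<exists>q \<in> U. gd_less \<delta> q p)}"

definition gen_dim_fun :: "('b, 'm) ring_scheme \<Rightarrow> ('b set \<Rightarrow> nat) \<Rightarrow> bool" where
  "gen_dim_fun B \<delta> \<longleftrightarrow> (\<forall>J. ideal J B \<longrightarrow> finite (gd_minimal \<delta> (V_set B J)))"

definition gen_dim :: "('b, 'm) ring_scheme \<Rightarrow> enat" where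
  "gen_dim B = (INF \<delta> \<in> {\<delta>. gen_dim_fun B \<delta>}. (SUP p \<in> Spec B. enat (\<delta> p)))"

end

theory Submission
  imports Defs
begin


locale ncr = cring R + noetherian_ring R for R (structure)

lemma ideal_carr: "ideal I R \<Longrightarrow> x \<in> I \<Longrightarrow> x \<in> carrier R"
  by (rule ideal.Icarr)
lemma ideal_sub: "ideal I R \<Longrightarrow> I \<subseteq> carrier R"
  using ideal_carr by fast
lemma ideal_zero: "ideal I R \<Longrightarrow> \<zero>\<^bsub>R\<^esub> \<in> I"
  by (rule additive_subgroup.zero_closed[OF ideal.axioms(1)])
lemma ideal_add: "ideal I R \<Longrightarrow> x \<in> I \<Longrightarrow> y \<in> I \<Longrightarrow> x \<oplus>\<^bsub>R\<^esub> y \<in> I"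
  by (rule additive_subgroup.a_closed[OF ideal.axioms(1)])
lemma ideal_neg: "ideal I R \<Longrightarrow> x \<in> I \<Longrightarrow> \<ominus>\<^bsub>R\<^esub> x \<in> I"
  by (rule additive_subgroup.a_inv_closed[OF ideal.axioms(1)])
lemma ideal_lm: "ideal I R \<Longrightarrow> x \<in> I \<Longrightarrow> r \<in> carrier R \<Longrightarrow> r \<otimes>\<^bsub>R\<^esub> x \<in> I"
  by (rule ideal.I_l_closed)
lemma ideal_rm: "ideal I R \<Longrightarrow> x \<in> I \<Longrightarrow> r \<in> carrier R \<Longrightarrow> x \<otimes>\<^bsub>R\<^esub> r \<in> I"
  by (rule ideal.I_r_closed)
lemma prime_ideal: "primeideal P R \<Longrightarrow> ideal P R"
  by (rule primeideal.axioms(1))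
lemma prime_cring: "primeideal P R \<Longrightarrow> cring R"
  by (rule primeideal.axioms(2))
lemma prime_one: "primeideal P R \<Longrightarrow> \<one>\<^bsub>R\<^esub> \<notin> P"
  using ideal.one_imp_carrier[OF prime_ideal] primeideal.I_notcarr by metis
lemma prime_prime: "primeideal P R \<Longrightarrow> a \<in> carrier R \<Longrightarrow> b \<in> carrier R \<Longrightarrow> a \<otimes>\<^bsub>R\<^esub> b \<in> P \<Longrightarrow> a \<in> P \<or> b \<in> P"
  by (rule primeideal.I_prime)

lemma (in ncr) max_ideal:
  assumes "SS \<subseteq> {I. ideal I R}" "SS \<noteq> {}"
  shows "\<exists>M\<in>SS. \<forall>K\<in>SS. M \<subseteq> K \<longrightarrow> K = M"
proof (rule Zorn_Lemma2, intro ballI)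
  fix C assume C: "C \<in> chains SS"
  show "\<exists>U\<in>SS. \<forall>K\<in>C. K \<subseteq> U"
  proof (cases "C = {}")
    case True then show ?thesis using assms(2) by auto
  next
    case False
    have "subset.chain SS C" using C unfolding chains_alt_def by simp
    then have "subset.chain {I. ideal I R} C"
      using assms(1) unfolding subset.chain_def by blast
    then have "\<Union>C \<in> C" using ideal_chain_is_trivial False by blast
    then show ?thesis using C unfolding chains_def by auto
  qed
qed

lemma (in cring) ideal_plus_elem:
  assumes I: "ideal I R" and a: "a \<in> carrier R"
  shows "ideal (set_add R I (PIdl a)) R" "I \<subseteq> set_add R I (PIdl a)" "a \<in> set_add R I (PIdl a)"
    "\<And>x. x \<in> set_add R I (PIdl a) \<Longrightarrow> \<exists>i\<in>I. \<exists>r\<in>carrier R. x = i \<oplus> r \<otimes> a"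
proof -
  show "ideal (set_add R I (PIdl a)) R" by (rule add_ideals[OF I cgenideal_ideal[OF a]])
  have mem: "i \<oplus> r \<otimes> a \<in> set_add R I (PIdl a)" if "i \<in> I" "r \<in> carrier R" for i r
  proof -
    have "r \<otimes> a \<in> PIdl a" unfolding cgenideal_def using that by blast
    then show ?thesis unfolding set_add_def' using that by blast
  qed
  show "I \<subseteq> set_add R I (PIdl a)"
  proof
    fix x assume x: "x \<in> I"
    have xc: "x \<in> carrier R" by (rule ideal_carr[OF I x])
    have "x \<oplus> \<zero> \<otimes> a = x" using xc a by simp
    then show "x \<in> set_add R I (PIdl a)" using mem[OF x, of "\<zero>"] by simp
  qed
  have z: "\<zero> \<in> I" by (rule ideal_zero[OF I])
  have "\<zero> \<oplus> \<one> \<otimes> a = a" using a by simp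
  then show "a \<in> set_add R I (PIdl a)" using mem[OF z, of "\<one>"] by simp
  show "\<And>x. x \<in> set_add R I (PIdl a) \<Longrightarrow> \<exists>i\<in>I. \<exists>r\<in>carrier R. x = i \<oplus> r \<otimes> a"
  proof -
    fix x assume "x \<in> set_add R I (PIdl a)"
    then obtain i y where iy: "i \<in> I" "y \<in> PIdl a" "x = i \<oplus> y" unfolding set_add_def' by blast
    then obtain r where "r \<in> carrier R" "y = r \<otimes> a" unfolding cgenideal_def by blast
    then show "\<exists>i\<in>I. \<exists>r\<in>carrier R. x = i \<oplus> r \<otimes> a" using iy by blast
  qed
qed

lemma (in cring) ideal_plus_sub:
  assumes I: "ideal I R" and a: "a \<in> carrier R" and P: "ideal P R" "I \<subseteq> P" "a \<in> P"
  shows "set_add R I (PIdl a) \<subseteq> P"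
proof
  fix y assume "y \<in> set_add R I (PIdl a)"
  then obtain i r where ir: "i \<in> I" "r \<in> carrier R" "y = i \<oplus> r \<otimes> a"
    using ideal_plus_elem(4)[OF I a] by blast
  have "i \<in> P" using ir(1) P(2) by blast
  moreover have "r \<otimes> a \<in> P" by (rule ideal_lm[OF P(1) P(3) ir(2)])
  ultimately show "y \<in> P" using ideal_add[OF P(1)] ir(3) by simp
qed

definition good_cover :: "('a, 'm) ring_scheme \<Rightarrow> 'a set \<Rightarrow> bool" where
  "good_cover R I \<longleftrightarrow> (\<exists>F. finite F \<and> (\<forall>Q\<in>F. primeideal Q R \<and> I \<subseteq> Q) \<and>
      (\<forall>P. primeideal P R \<and> I \<subseteq> P \<longrightarrow> (\<exists>Q\<in>F. Q \<subseteq> P)))"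

lemma (in ncr) all_good: "ideal I R \<Longrightarrow> good_cover R I"
proof (rule ccontr)
  assume I0: "ideal I R" "\<not> good_cover R I"
  define SS where "SS = {I. ideal I R \<and> \<not> good_cover R I}"
  have "SS \<subseteq> {I. ideal I R}" "SS \<noteq> {}" using I0 unfolding SS_def by auto
  then obtain M where M: "M \<in> SS" and Mmax: "\<And>K. K \<in> SS \<Longrightarrow> M \<subseteq> K \<Longrightarrow> K = M"
    using max_ideal[of SS] by blast
  have Mi: "ideal M R" and Mg: "\<not> good_cover R M" using M unfolding SS_def by auto
  have Msub: "M \<subseteq> carrier R" by (rule ideal_sub[OF Mi])
  show False
  proof (cases "M = carrier R")
    case True
    have "\<not> (primeideal P R \<and> M \<subseteq> P)" for P
    proof
      assume "primeideal P R \<and> M \<subseteq> P"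
      then have "\<one> \<in> P" using True by blast
      then show False using prime_one \<open>primeideal P R \<and> M \<subseteq> P\<close> by blast
    qed
    then have "good_cover R M" unfolding good_cover_def by (intro exI[of _ "{}"]) simp
    then show False using Mg by blast
  next
    case Mne: False
    show False
    proof (cases "primeideal M R")
      case True
      have "good_cover R M" unfolding good_cover_def
        by (rule exI[of _ "{M}"]) (use True in auto)
      then show False using Mg by blast
    next
      case False
      have "\<not> (\<forall>a b. a \<in> carrier R \<longrightarrow> b \<in> carrier R \<longrightarrow> a \<otimes> b \<in> M \<longrightarrow> a \<in> M \<or> b \<in> M)"
      proof
        assume "\<forall>a b. a \<in> carrier R \<longrightarrow> b \<in> carrier R \<longrightarrow> a \<otimes> b \<in> M \<longrightarrow> a \<in> M \<or> b \<in> M"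
        then have "primeideal M R" by (intro primeidealI[OF Mi is_cring]) (use Mne Msub in auto)
        then show False using False by blast
      qed
      then obtain a b where ab: "a \<in> carrier R" "b \<in> carrier R" "a \<otimes> b \<in> M" "a \<notin> M" "b \<notin> M"
        by blast
      have ga: "good_cover R (set_add R M (PIdl a))"
      proof (rule ccontr)
        assume "\<not> good_cover R (set_add R M (PIdl a))"
        then have "set_add R M (PIdl a) = M" using Mmax[of "set_add R M (PIdl a)"] ideal_plus_elem(1,2)[OF Mi ab(1)] unfolding SS_def by blast
        then show False using ideal_plus_elem(3)[OF Mi ab(1)] ab(4) by simp
      qed
      have gb: "good_cover R (set_add R M (PIdl b))"
      proof (rule ccontr)
        assume "\<not> good_cover R (set_add R M (PIdl b))"
        then have "set_add R M (PIdl b) = M" using Mmax[of "set_add R M (PIdl b)"] ideal_plus_elem(1,2)[OF Mi ab(2)] unfolding SS_def by blast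
        then show False using ideal_plus_elem(3)[OF Mi ab(2)] ab(5) by simp
      qed
      obtain F1 where F1: "finite F1" "\<forall>Q\<in>F1. primeideal Q R \<and> set_add R M (PIdl a) \<subseteq> Q"
        "\<forall>P. primeideal P R \<and> set_add R M (PIdl a) \<subseteq> P \<longrightarrow> (\<exists>Q\<in>F1. Q \<subseteq> P)"
        using ga unfolding good_cover_def by blast
      obtain F2 where F2: "finite F2" "\<forall>Q\<in>F2. primeideal Q R \<and> set_add R M (PIdl b) \<subseteq> Q"
        "\<forall>P. primeideal P R \<and> set_add R M (PIdl b) \<subseteq> P \<longrightarrow> (\<exists>Q\<in>F2. Q \<subseteq> P)"
        using gb unfolding good_cover_def by blast
      have "good_cover R M" unfolding good_cover_def
      proof (rule exI[of _ "F1 \<union> F2"], intro conjI)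
        show "finite (F1 \<union> F2)" using F1(1) F2(1) by simp
        show "\<forall>Q\<in>F1 \<union> F2. primeideal Q R \<and> M \<subseteq> Q"
          using F1(2) F2(2) ideal_plus_elem(2)[OF Mi ab(1)] ideal_plus_elem(2)[OF Mi ab(2)] by blast
        show "\<forall>P. primeideal P R \<and> M \<subseteq> P \<longrightarrow> (\<exists>Q\<in>F1 \<union> F2. Q \<subseteq> P)"
        proof (intro allI impI)
          fix P assume P: "primeideal P R \<and> M \<subseteq> P"
          have Pi: "ideal P R" using prime_ideal P by blast
          have Pp: "primeideal P R" using P by blast
          have abP: "a \<otimes> b \<in> P" using P ab(3) by blast
          have "a \<in> P \<or> b \<in> P" by (rule prime_prime[OF Pp ab(1,2) abP])
          then show "\<exists>Q\<in>F1 \<union> F2. Q \<subseteq> P"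
          proof
            assume "a \<in> P"
            then have "set_add R M (PIdl a) \<subseteq> P" using ideal_plus_sub[OF Mi ab(1) Pi] P by blast
            then show ?thesis using F1(3) P by blast
          next
            assume "b \<in> P"
            then have "set_add R M (PIdl b) \<subseteq> P" using ideal_plus_sub[OF Mi ab(2) Pi] P by blast
            then show ?thesis using F2(3) P by blast
          qed
        qed
      qed
      then show False using Mg by blast
    qed
  qed
qed

definition minP :: "('a, 'm) ring_scheme \<Rightarrow> 'a set \<Rightarrow> 'a set set" where
  "minP R K = {P. primeideal P R \<and> K \<subseteq> P \<and> (\<forall>Q. primeideal Q R \<and> K \<subseteq> Q \<and> Q \<subseteq> P \<longrightarrow> Q = P)}"

lemma (in ncr) finite_minP:
  assumes K: "K \<subseteq> carrier R"
  shows "finite (minP R K)"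
proof -
  have "ideal (Idl K) R" by (rule genideal_ideal[OF K])
  then obtain F where F: "finite F" "\<forall>Q\<in>F. primeideal Q R \<and> Idl K \<subseteq> Q"
      "\<forall>P. primeideal P R \<and> Idl K \<subseteq> P \<longrightarrow> (\<exists>Q\<in>F. Q \<subseteq> P)"
    using all_good[OF \<open>ideal (Idl K) R\<close>] unfolding good_cover_def by blast
  have "minP R K \<subseteq> F"
  proof
    fix P assume P: "P \<in> minP R K"
    then have Pp: "primeideal P R" and KP: "K \<subseteq> P" unfolding minP_def by auto
    have "Idl K \<subseteq> P" by (rule genideal_minimal[OF prime_ideal[OF Pp] KP])
    then obtain Q where Q: "Q \<in> F" "Q \<subseteq> P" using F(3) Pp by blast
    have "K \<subseteq> Idl K" by (rule genideal_self[OF K])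
    then have "K \<subseteq> Q" using F(2) Q(1) by blast
    have Qp: "primeideal Q R" using F(2) Q(1) by blast
    have "\<forall>Q. primeideal Q R \<and> K \<subseteq> Q \<and> Q \<subseteq> P \<longrightarrow> Q = P" using P unfolding minP_def by blast
    then have "Q = P" using Qp \<open>K \<subseteq> Q\<close> Q(2) by blast
    then show "P \<in> F" using Q by simp
  qed
  then show ?thesis by (rule finite_subset[OF _ F(1)])
qed

lemma (in ncr) prime_avoid:
  assumes I: "ideal I R" and T: "T \<subseteq> carrier R" "\<one> \<in> T"
    "\<And>x y. x \<in> T \<Longrightarrow> y \<in> T \<Longrightarrow> x \<otimes> y \<in> T" and dis: "I \<inter> T = {}"
  shows "\<exists>P. primeideal P R \<and> I \<subseteq> P \<and> P \<inter> T = {}"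
proof -
  define SS where "SS = {J. ideal J R \<and> I \<subseteq> J \<and> J \<inter> T = {}}"
  have "SS \<subseteq> {I. ideal I R}" "SS \<noteq> {}" using I dis unfolding SS_def by auto
  then obtain M where M: "M \<in> SS" and Mmax: "\<And>K. K \<in> SS \<Longrightarrow> M \<subseteq> K \<Longrightarrow> K = M"
    using max_ideal[of SS] by blast
  have Mi: "ideal M R" and IM: "I \<subseteq> M" and MT: "M \<inter> T = {}" using M unfolding SS_def by auto
  have Msub: "M \<subseteq> carrier R" by (rule ideal_sub[OF Mi])
  have ext: "\<exists>t\<in>T. \<exists>i\<in>M. \<exists>r\<in>carrier R. t = i \<oplus> r \<otimes> a" if a: "a \<in> carrier R" "a \<notin> M" for a
  proof (rule ccontr)
    assume "\<not> ?thesis"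
    then have "set_add R M (PIdl a) \<inter> T = {}" using ideal_plus_elem(4)[OF Mi a(1)] by blast
    then have "set_add R M (PIdl a) \<in> SS" unfolding SS_def using ideal_plus_elem(1,2)[OF Mi a(1)] IM by blast
    then have "set_add R M (PIdl a) = M" using Mmax ideal_plus_elem(2)[OF Mi a(1)] by blast
    then show False using ideal_plus_elem(3)[OF Mi a(1)] a(2) by simp
  qed
  have "primeideal M R"
  proof (rule primeidealI[OF Mi is_cring])
    show "carrier R \<noteq> M" using MT T(2) by blast
    fix a b assume ab: "a \<in> carrier R" "b \<in> carrier R" "a \<otimes> b \<in> M"
    show "a \<in> M \<or> b \<in> M"
    proof (rule ccontr)
      assume "\<not> (a \<in> M \<or> b \<in> M)"
      then have na: "a \<notin> M" and nb: "b \<notin> M" by auto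
      obtain t1 i1 r1 where e1: "t1 \<in> T" "i1 \<in> M" "r1 \<in> carrier R" "t1 = i1 \<oplus> r1 \<otimes> a"
        using ext[OF ab(1) na] by blast
      obtain t2 i2 r2 where e2: "t2 \<in> T" "i2 \<in> M" "r2 \<in> carrier R" "t2 = i2 \<oplus> r2 \<otimes> b"
        using ext[OF ab(2) nb] by blast
      have c: "i1 \<in> carrier R" "i2 \<in> carrier R" using e1(2) e2(2) Msub by auto
      have "t1 \<otimes> t2 = (i1 \<oplus> r1 \<otimes> a) \<otimes> (i2 \<oplus> r2 \<otimes> b)" using e1(4) e2(4) by simp
      also have "\<dots> = i1 \<otimes> (i2 \<oplus> r2 \<otimes> b) \<oplus> (r1 \<otimes> a \<otimes> i2 \<oplus> (r1 \<otimes> r2) \<otimes> (a \<otimes> b))"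
        using e1(3) e2(3) c ab(1,2) by algebra
      also have "\<dots> \<in> M"
      proof -
        have m1: "i1 \<otimes> (i2 \<oplus> r2 \<otimes> b) \<in> M"
          using ideal_rm[OF Mi e1(2)] c e2(3) ab(2) by simp
        have m2: "r1 \<otimes> a \<otimes> i2 \<in> M"
          using ideal_lm[OF Mi e2(2)] e1(3) ab(1) by simp
        have m3: "(r1 \<otimes> r2) \<otimes> (a \<otimes> b) \<in> M"
          using ideal_lm[OF Mi ab(3)] e1(3) e2(3) by simp
        show ?thesis by (rule ideal_add[OF Mi m1 ideal_add[OF Mi m2 m3]])
      qed
      finally show False using MT T(3) e1(1) e2(1) by blast
    qed
  qed
  then show ?thesis using IM MT by blast
qed



locale locs = cring R for R (structure) + fixes s assumes s_c: "s \<in> carrier R"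
begin

abbreviation SS where "SS \<equiv> one_plus R s"
abbreviation rel where "rel \<equiv> loc_rel R SS"
abbreviation cls where "cls a u \<equiv> rel `` {(a, u)}"
abbreviation BB where "BB \<equiv> localization R SS"

lemma S_iff: "u \<in> SS \<longleftrightarrow> (\<exists>a\<in>carrier R. u = \<one> \<oplus> s \<otimes> a)"
  unfolding one_plus_def by blast

lemma S_carr: "u \<in> SS \<Longrightarrow> u \<in> carrier R"
  using S_iff s_c by auto

lemma one_S: "\<one> \<in> SS"
proof -
  have "\<one> = \<one> \<oplus> s \<otimes> \<zero>" using s_c by simp
  then show ?thesis unfolding S_iff by blast
qed

lemma S_mult: assumes "u \<in> SS" "v \<in> SS" shows "u \<otimes> v \<in> SS"
proof -
  obtain a where a: "a \<in> carrier R" "u = \<one> \<oplus> s \<otimes> a" using assms(1) S_iff by blast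
  obtain b where b: "b \<in> carrier R" "v = \<one> \<oplus> s \<otimes> b" using assms(2) S_iff by blast
  have "u \<otimes> v = \<one> \<oplus> s \<otimes> (a \<oplus> b \<oplus> s \<otimes> a \<otimes> b)"
    unfolding a(2) b(2) using a(1) b(1) s_c by algebra
  moreover have "a \<oplus> b \<oplus> s \<otimes> a \<otimes> b \<in> carrier R" using a(1) b(1) s_c by simp
  ultimately show ?thesis unfolding S_iff by blast
qed

lemma rel_iff: "((a, u), (b, v)) \<in> rel \<longleftrightarrow> a \<in> carrier R \<and> u \<in> SS \<and> b \<in> carrier R \<and> v \<in> SS \<and>
   (\<exists>t\<in>SS. t \<otimes> (a \<otimes> v \<ominus> b \<otimes> u) = \<zero>)"
  unfolding loc_rel_def by simp

lemma rel_sub: "rel \<subseteq> (carrier R \<times> SS) \<times> (carrier R \<times> SS)"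
  unfolding loc_rel_def by auto

lemma equiv_rel: "equiv (carrier R \<times> SS) rel"
proof (rule equivI[OF rel_sub])
  show "refl_on (carrier R \<times> SS) rel"
  proof (rule refl_onI)
    fix x assume "x \<in> carrier R \<times> SS"
    then obtain a u where x: "x = (a, u)" "a \<in> carrier R" "u \<in> SS" by blast
    have uc: "u \<in> carrier R" using S_carr x(3) .
    have "\<one> \<otimes> (a \<otimes> u \<ominus> a \<otimes> u) = \<zero>" using x(2) uc by algebra
    then show "(x, x) \<in> rel" unfolding x(1) rel_iff using x(2,3) one_S by blast
  qed
  show "sym rel"
  proof (rule symI)
    fix x y assume "(x, y) \<in> rel"
    then obtain a u b v where xy: "x = (a, u)" "y = (b, v)" by (cases x, cases y) auto
    obtain t where h: "a \<in> carrier R" "u \<in> SS" "b \<in> carrier R" "v \<in> SS" "t \<in> SS"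
      "t \<otimes> (a \<otimes> v \<ominus> b \<otimes> u) = \<zero>"
      using \<open>(x, y) \<in> rel\<close> unfolding xy rel_iff by blast
    have c: "u \<in> carrier R" "v \<in> carrier R" "t \<in> carrier R" using h S_carr by auto
    have "t \<otimes> (b \<otimes> u \<ominus> a \<otimes> v) = \<ominus> (t \<otimes> (a \<otimes> v \<ominus> b \<otimes> u))"
      using c h(1,3) by algebra
    also have "\<dots> = \<zero>" using h(6) by simp
    finally show "(y, x) \<in> rel" unfolding xy rel_iff using h by blast
  qed
  show "trans rel"
  proof (rule transI)
    fix x y z assume "(x, y) \<in> rel" "(y, z) \<in> rel"
    then obtain a u b v c w where xyz: "x = (a, u)" "y = (b, v)" "z = (c, w)"
      by (cases x, cases y, cases z) auto
    obtain t1 where h1: "a \<in> carrier R" "u \<in> SS" "b \<in> carrier R" "v \<in> SS" "t1 \<in> SS"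
      "t1 \<otimes> (a \<otimes> v \<ominus> b \<otimes> u) = \<zero>"
      using \<open>(x, y) \<in> rel\<close> unfolding xyz rel_iff by blast
    obtain t2 where h2: "c \<in> carrier R" "w \<in> SS" "t2 \<in> SS"
      "t2 \<otimes> (b \<otimes> w \<ominus> c \<otimes> v) = \<zero>"
      using \<open>(y, z) \<in> rel\<close> unfolding xyz rel_iff by blast
    have cc: "u \<in> carrier R" "v \<in> carrier R" "w \<in> carrier R" "t1 \<in> carrier R" "t2 \<in> carrier R"
      using h1 h2 S_carr by auto
    have tS: "t1 \<otimes> t2 \<otimes> v \<in> SS" using S_mult h1(4,5) h2(3) by blast
    have "t1 \<otimes> t2 \<otimes> v \<otimes> (a \<otimes> w \<ominus> c \<otimes> u) =
          t2 \<otimes> w \<otimes> (t1 \<otimes> (a \<otimes> v \<ominus> b \<otimes> u)) \<oplus> t1 \<otimes> u \<otimes> (t2 \<otimes> (b \<otimes> w \<ominus> c \<otimes> v))"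
      using cc h1(1,3) h2(1) by algebra
    also have "\<dots> = \<zero>" using h1(6) h2(4) cc by simp
    finally show "(x, z) \<in> rel" unfolding xyz rel_iff using h1 h2 tS by blast
  qed
qed

lemma cls_eq:
  assumes "a \<in> carrier R" "u \<in> SS" "b \<in> carrier R" "v \<in> SS"
  shows "cls a u = cls b v \<longleftrightarrow> ((a, u), (b, v)) \<in> rel"
proof -
  have "(a, u) \<in> carrier R \<times> SS" "(b, v) \<in> carrier R \<times> SS" using assms by auto
  then show ?thesis by (rule eq_equiv_class_iff[OF equiv_rel])
qed

lemma cls_eqI:
  assumes "a \<in> carrier R" "u \<in> SS" "b \<in> carrier R" "v \<in> SS" "t \<in> SS"
   "t \<otimes> (a \<otimes> v \<ominus> b \<otimes> u) = \<zero>"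
  shows "cls a u = cls b v"
proof -
  have "((a, u), (b, v)) \<in> rel" unfolding rel_iff using assms by blast
  then show ?thesis using cls_eq[OF assms(1-4)] by simp
qed

lemma cls_eqI1:
  assumes "a \<in> carrier R" "u \<in> SS" "b \<in> carrier R" "v \<in> SS"
   "a \<otimes> v \<ominus> b \<otimes> u = \<zero>"
  shows "cls a u = cls b v"
proof (rule cls_eqI[OF assms(1-4) one_S])
  have "a \<otimes> v \<ominus> b \<otimes> u \<in> carrier R" using assms(1-4) S_carr by simp
  then show "\<one> \<otimes> (a \<otimes> v \<ominus> b \<otimes> u) = \<zero>" using assms(5) by simp
qed

lemma carrier_BB0: "carrier BB = (carrier R \<times> SS) // rel"
  unfolding localization_def by simp

lemma cls_carr: "a \<in> carrier R \<Longrightarrow> u \<in> SS \<Longrightarrow> cls a u \<in> carrier BB"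
  unfolding carrier_BB0 by (rule quotientI) simp

lemma BB_rep:
  assumes "x \<in> carrier BB"
  shows "\<exists>a u. a \<in> carrier R \<and> u \<in> SS \<and> x = cls a u"
proof -
  obtain p where p: "p \<in> carrier R \<times> SS" "x = rel `` {p}"
    using assms unfolding carrier_BB0 by (rule quotientE)
  obtain a u where "p = (a, u)" by (cases p)
  then show ?thesis using p by blast
qed

lemma some_rep:
  assumes "a \<in> carrier R" "u \<in> SS"
  shows "((a, u), (SOME p. p \<in> cls a u)) \<in> rel"
proof -
  have "(a, u) \<in> cls a u"
    using equiv_class_self[OF equiv_rel] assms by blast
  then have "(SOME p. p \<in> cls a u) \<in> cls a u" by (rule someI)
  then show ?thesis by blast
qed

lemma compat_mult:
  assumes "((a, u), (a', u')) \<in> rel" "((b, v), (b', v')) \<in> rel"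
  shows "((a \<otimes> b, u \<otimes> v), (a' \<otimes> b', u' \<otimes> v')) \<in> rel"
proof -
  obtain t1 where h1: "a \<in> carrier R" "u \<in> SS" "a' \<in> carrier R" "u' \<in> SS" "t1 \<in> SS"
      "t1 \<otimes> (a \<otimes> u' \<ominus> a' \<otimes> u) = \<zero>" using assms(1) unfolding rel_iff by blast
  obtain t2 where h2: "b \<in> carrier R" "v \<in> SS" "b' \<in> carrier R" "v' \<in> SS" "t2 \<in> SS"
      "t2 \<otimes> (b \<otimes> v' \<ominus> b' \<otimes> v) = \<zero>" using assms(2) unfolding rel_iff by blast
  have cc: "u \<in> carrier R" "v \<in> carrier R" "u' \<in> carrier R" "v' \<in> carrier R" "t1 \<in> carrier R" "t2 \<in> carrier R"
    using h1 h2 S_carr by auto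
  have "t1 \<otimes> t2 \<otimes> ((a \<otimes> b) \<otimes> (u' \<otimes> v') \<ominus> (a' \<otimes> b') \<otimes> (u \<otimes> v)) =
        t2 \<otimes> b \<otimes> v' \<otimes> (t1 \<otimes> (a \<otimes> u' \<ominus> a' \<otimes> u)) \<oplus> t1 \<otimes> a' \<otimes> u \<otimes> (t2 \<otimes> (b \<otimes> v' \<ominus> b' \<otimes> v))"
    using cc h1(1,3) h2(1,3) by algebra
  also have "\<dots> = \<zero>" using h1 h2 cc by simp
  finally show ?thesis unfolding rel_iff using h1 h2 S_mult by auto
qed

lemma compat_add:
  assumes "((a, u), (a', u')) \<in> rel" "((b, v), (b', v')) \<in> rel"
  shows "((a \<otimes> v \<oplus> b \<otimes> u, u \<otimes> v), (a' \<otimes> v' \<oplus> b' \<otimes> u', u' \<otimes> v')) \<in> rel"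
proof -
  obtain t1 where h1: "a \<in> carrier R" "u \<in> SS" "a' \<in> carrier R" "u' \<in> SS" "t1 \<in> SS"
      "t1 \<otimes> (a \<otimes> u' \<ominus> a' \<otimes> u) = \<zero>" using assms(1) unfolding rel_iff by blast
  obtain t2 where h2: "b \<in> carrier R" "v \<in> SS" "b' \<in> carrier R" "v' \<in> SS" "t2 \<in> SS"
      "t2 \<otimes> (b \<otimes> v' \<ominus> b' \<otimes> v) = \<zero>" using assms(2) unfolding rel_iff by blast
  have cc: "u \<in> carrier R" "v \<in> carrier R" "u' \<in> carrier R" "v' \<in> carrier R" "t1 \<in> carrier R" "t2 \<in> carrier R"
    using h1 h2 S_carr by auto
  have "t1 \<otimes> t2 \<otimes> ((a \<otimes> v \<oplus> b \<otimes> u) \<otimes> (u' \<otimes> v') \<ominus> (a' \<otimes> v' \<oplus> b' \<otimes> u') \<otimes> (u \<otimes> v)) =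
        t2 \<otimes> v \<otimes> v' \<otimes> (t1 \<otimes> (a \<otimes> u' \<ominus> a' \<otimes> u)) \<oplus> t1 \<otimes> u \<otimes> u' \<otimes> (t2 \<otimes> (b \<otimes> v' \<ominus> b' \<otimes> v))"
    using cc h1(1,3) h2(1,3) by algebra
  also have "\<dots> = \<zero>" using h1 h2 cc by simp
  finally show ?thesis unfolding rel_iff using h1 h2 S_mult cc by auto
qed

lemma mult_BB:
  assumes "a \<in> carrier R" "u \<in> SS" "b \<in> carrier R" "v \<in> SS"
  shows "cls a u \<otimes>\<^bsub>BB\<^esub> cls b v = cls (a \<otimes> b) (u \<otimes> v)"
proof -
  define p where "p = (SOME p. p \<in> cls a u)"
  define q where "q = (SOME q. q \<in> cls b v)"
  have p: "((a, u), (fst p, snd p)) \<in> rel" using some_rep[OF assms(1,2)] unfolding p_def by simp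
  have q: "((b, v), (fst q, snd q)) \<in> rel" using some_rep[OF assms(3,4)] unfolding q_def by simp
  have "((a \<otimes> b, u \<otimes> v), (fst p \<otimes> fst q, snd p \<otimes> snd q)) \<in> rel" by (rule compat_mult[OF p q])
  then have "cls (fst p \<otimes> fst q) (snd p \<otimes> snd q) = cls (a \<otimes> b) (u \<otimes> v)"
    using equiv_class_eq[OF equiv_rel] by metis
  then show ?thesis unfolding localization_def loc_mult_def Let_def p_def q_def by simp
qed

lemma add_BB:
  assumes "a \<in> carrier R" "u \<in> SS" "b \<in> carrier R" "v \<in> SS"
  shows "cls a u \<oplus>\<^bsub>BB\<^esub> cls b v = cls (a \<otimes> v \<oplus> b \<otimes> u) (u \<otimes> v)"
proof -
  define p where "p = (SOME p. p \<in> cls a u)"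
  define q where "q = (SOME q. q \<in> cls b v)"
  have p: "((a, u), (fst p, snd p)) \<in> rel" using some_rep[OF assms(1,2)] unfolding p_def by simp
  have q: "((b, v), (fst q, snd q)) \<in> rel" using some_rep[OF assms(3,4)] unfolding q_def by simp
  have "((a \<otimes> v \<oplus> b \<otimes> u, u \<otimes> v), (fst p \<otimes> snd q \<oplus> fst q \<otimes> snd p, snd p \<otimes> snd q)) \<in> rel"
    by (rule compat_add[OF p q])
  then have "cls (fst p \<otimes> snd q \<oplus> fst q \<otimes> snd p) (snd p \<otimes> snd q) = cls (a \<otimes> v \<oplus> b \<otimes> u) (u \<otimes> v)"
    using equiv_class_eq[OF equiv_rel] by metis
  then show ?thesis unfolding localization_def loc_add_def Let_def p_def q_def by simp
qed

lemma zero_BB: "\<zero>\<^bsub>BB\<^esub> = cls \<zero> \<one>"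
  unfolding localization_def by simp

lemma one_BB: "\<one>\<^bsub>BB\<^esub> = cls \<one> \<one>"
  unfolding localization_def by simp


abbreviation ee where "ee P \<equiv> {x. \<exists>a\<in>P. \<exists>u\<in>SS. x = cls a u}"
abbreviation cc where "cc p \<equiv> {a \<in> carrier R. cls a \<one> \<in> p}"

lemma unit_BB: assumes "u \<in> SS" shows "cls u \<one> \<otimes>\<^bsub>BB\<^esub> cls \<one> u = \<one>\<^bsub>BB\<^esub>"
proof -
  have uc: "u \<in> carrier R" using S_carr assms .
  have "cls u \<one> \<otimes>\<^bsub>BB\<^esub> cls \<one> u = cls (u \<otimes> \<one>) (\<one> \<otimes> u)"
    by (rule mult_BB[OF uc one_S one_closed assms])
  also have "\<dots> = cls \<one> \<one>"
  proof (rule cls_eqI1)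
    show "u \<otimes> \<one> \<in> carrier R" "\<one> \<otimes> u \<in> SS" "\<one> \<in> carrier R" "\<one> \<in> SS"
      using uc assms one_S by auto
    show "u \<otimes> \<one> \<otimes> \<one> \<ominus> \<one> \<otimes> (\<one> \<otimes> u) = \<zero>" using uc by algebra
  qed
  finally show ?thesis unfolding one_BB .
qed

lemma split_BB: assumes "a \<in> carrier R" "u \<in> SS" shows "cls a u = cls a \<one> \<otimes>\<^bsub>BB\<^esub> cls \<one> u"
proof -
  have uc: "u \<in> carrier R" using S_carr assms(2) .
  have "cls a \<one> \<otimes>\<^bsub>BB\<^esub> cls \<one> u = cls (a \<otimes> \<one>) (\<one> \<otimes> u)"
    by (rule mult_BB[OF assms(1) one_S one_closed assms(2)])
  also have "a \<otimes> \<one> = a" using assms(1) by simp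
  also have "\<one> \<otimes> u = u" using uc by simp
  finally show ?thesis by simp
qed

lemma back_BB: assumes "a \<in> carrier R" "u \<in> SS" shows "cls a \<one> = cls a u \<otimes>\<^bsub>BB\<^esub> cls u \<one>"
proof -
  have uc: "u \<in> carrier R" using S_carr assms(2) .
  have "cls a u \<otimes>\<^bsub>BB\<^esub> cls u \<one> = cls (a \<otimes> u) (u \<otimes> \<one>)"
    by (rule mult_BB[OF assms(1,2) uc one_S])
  also have "\<dots> = cls a \<one>"
  proof (rule cls_eqI1)
    show "a \<otimes> u \<in> carrier R" "u \<otimes> \<one> \<in> SS" "a \<in> carrier R" "\<one> \<in> SS"
      using uc assms one_S by auto
    show "a \<otimes> u \<otimes> \<one> \<ominus> a \<otimes> (u \<otimes> \<one>) = \<zero>" using uc assms(1) by algebra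
  qed
  finally show ?thesis by simp
qed

lemma hom_add: assumes "a \<in> carrier R" "b \<in> carrier R"
  shows "cls (a \<oplus> b) \<one> = cls a \<one> \<oplus>\<^bsub>BB\<^esub> cls b \<one>"
proof -
  have "cls a \<one> \<oplus>\<^bsub>BB\<^esub> cls b \<one> = cls (a \<otimes> \<one> \<oplus> b \<otimes> \<one>) (\<one> \<otimes> \<one>)"
    by (rule add_BB[OF assms(1) one_S assms(2) one_S])
  also have "a \<otimes> \<one> \<oplus> b \<otimes> \<one> = a \<oplus> b" using assms by simp
  also have "\<one> \<otimes> \<one> = \<one>" by simp
  finally show ?thesis by simp
qed

lemma hom_mult: assumes "a \<in> carrier R" "b \<in> carrier R"
  shows "cls (a \<otimes> b) \<one> = cls a \<one> \<otimes>\<^bsub>BB\<^esub> cls b \<one>"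
proof -
  have "cls a \<one> \<otimes>\<^bsub>BB\<^esub> cls b \<one> = cls (a \<otimes> b) (\<one> \<otimes> \<one>)"
    by (rule mult_BB[OF assms(1) one_S assms(2) one_S])
  also have "\<one> \<otimes> \<one> = \<one>" by simp
  finally show ?thesis by simp
qed

lemma neg_BB: assumes rB: "ring BB" and "a \<in> carrier R" "u \<in> SS"
  shows "\<ominus>\<^bsub>BB\<^esub> cls a u = cls (\<ominus> a) u"
proof -
  have uc: "u \<in> carrier R" using S_carr assms(3) .
  have "cls (\<ominus> a) u \<oplus>\<^bsub>BB\<^esub> cls a u = cls (\<ominus> a \<otimes> u \<oplus> a \<otimes> u) (u \<otimes> u)"
    by (rule add_BB[OF _ assms(3) assms(2) assms(3)]) (use assms(2) in simp)
  also have "\<dots> = cls \<zero> \<one>"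
  proof (rule cls_eqI1)
    show "\<ominus> a \<otimes> u \<oplus> a \<otimes> u \<in> carrier R" "u \<otimes> u \<in> SS" "\<zero> \<in> carrier R" "\<one> \<in> SS"
      using uc assms(2,3) one_S S_mult by auto
    show "(\<ominus> a \<otimes> u \<oplus> a \<otimes> u) \<otimes> \<one> \<ominus> \<zero> \<otimes> (u \<otimes> u) = \<zero>" using uc assms(2) by algebra
  qed
  finally have e: "cls (\<ominus> a) u \<oplus>\<^bsub>BB\<^esub> cls a u = \<zero>\<^bsub>BB\<^esub>" unfolding zero_BB .
  have c1: "cls a u \<in> carrier BB" by (rule cls_carr[OF assms(2,3)])
  have c2: "cls (\<ominus> a) u \<in> carrier BB" by (rule cls_carr[OF _ assms(3)]) (use assms(2) in simp)
  show ?thesis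
    by (rule abelian_group.minus_equality[OF ring.is_abelian_group[OF rB] e c1 c2])
qed

lemma ee_mem:
  assumes P: "primeideal P R" "P \<inter> SS = {}" and a: "a \<in> carrier R" "u \<in> SS"
  shows "cls a u \<in> ee P \<longleftrightarrow> a \<in> P"
proof
  assume "a \<in> P" then show "cls a u \<in> ee P" using a(2) by blast
next
  assume "cls a u \<in> ee P"
  then obtain b v where bv: "b \<in> P" "v \<in> SS" "cls a u = cls b v" by blast
  have Pi: "ideal P R" by (rule prime_ideal[OF P(1)])
  have bc: "b \<in> carrier R" by (rule ideal_carr[OF Pi bv(1)])
  have uc: "u \<in> carrier R" "v \<in> carrier R" using S_carr a(2) bv(2) by auto
  have "((a, u), (b, v)) \<in> rel" using cls_eq[OF a bc bv(2)] bv(3) by simp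
  then obtain t where t: "t \<in> SS" "t \<otimes> (a \<otimes> v \<ominus> b \<otimes> u) = \<zero>" unfolding rel_iff by blast
  have tc: "t \<in> carrier R" using S_carr t(1) .
  have "t \<otimes> (a \<otimes> v \<ominus> b \<otimes> u) \<in> P" using t(2) ideal_zero[OF Pi] by simp
  moreover have "t \<notin> P" using t(1) P(2) by blast
  moreover have dc: "a \<otimes> v \<ominus> b \<otimes> u \<in> carrier R" using a(1) uc bc by simp
  ultimately have d: "a \<otimes> v \<ominus> b \<otimes> u \<in> P"
    using prime_prime[OF P(1) tc dc] by blast
  have bu: "b \<otimes> u \<in> P" by (rule ideal_rm[OF Pi bv(1) uc(1)])
  have "a \<otimes> v = (a \<otimes> v \<ominus> b \<otimes> u) \<oplus> b \<otimes> u" using a(1) uc bc by algebra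
  also have "\<dots> \<in> P" by (rule ideal_add[OF Pi d bu])
  finally have "a \<otimes> v \<in> P" .
  moreover have "v \<notin> P" using bv(2) P(2) by blast
  ultimately show "a \<in> P" using prime_prime[OF P(1) a(1) uc(2)] by blast
qed

lemma ee_prime:
  assumes cB: "cring BB" and P: "primeideal P R" "P \<inter> SS = {}"
  shows "primeideal (ee P) BB"
proof -
  have rB: "ring BB" using cB cring.axioms(1) by blast
  have Pi: "ideal P R" by (rule prime_ideal[OF P(1)])
  have Psub: "P \<subseteq> carrier R" by (rule ideal_sub[OF Pi])
  have sub: "ee P \<subseteq> carrier BB" using cls_carr Psub by blast
  have addc: "x \<oplus>\<^bsub>BB\<^esub> y \<in> ee P" if xP: "x \<in> ee P" and yP: "y \<in> ee P" for x y
  proof -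
    obtain a u where au: "a \<in> P" "u \<in> SS" "x = cls a u" using xP by blast
    obtain b v where bv: "b \<in> P" "v \<in> SS" "y = cls b v" using yP by blast
    have c: "a \<in> carrier R" "b \<in> carrier R" "u \<in> carrier R" "v \<in> carrier R"
      using au bv Psub S_carr by auto
    have "x \<oplus>\<^bsub>BB\<^esub> y = cls (a \<otimes> v \<oplus> b \<otimes> u) (u \<otimes> v)"
      unfolding au(3) bv(3) by (rule add_BB[OF c(1) au(2) c(2) bv(2)])
    moreover have "a \<otimes> v \<oplus> b \<otimes> u \<in> P"
      by (rule ideal_add[OF Pi ideal_rm[OF Pi au(1) c(4)] ideal_rm[OF Pi bv(1) c(3)]])
    moreover have "u \<otimes> v \<in> SS" by (rule S_mult[OF au(2) bv(2)])
    ultimately show ?thesis by blast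
  qed
  have zc: "\<zero>\<^bsub>BB\<^esub> \<in> ee P" unfolding zero_BB using ideal_zero[OF Pi] one_S by blast
  have negc: "\<ominus>\<^bsub>BB\<^esub> x \<in> ee P" if xP: "x \<in> ee P" for x
  proof -
    obtain a u where au: "a \<in> P" "u \<in> SS" "x = cls a u" using xP by blast
    have ac: "a \<in> carrier R" using au(1) Psub by blast
    have "\<ominus>\<^bsub>BB\<^esub> x = cls (\<ominus> a) u" unfolding au(3) by (rule neg_BB[OF rB ac au(2)])
    moreover have "\<ominus> a \<in> P" by (rule ideal_neg[OF Pi au(1)])
    ultimately show ?thesis using au(2) by blast
  qed
  have lc: "x \<otimes>\<^bsub>BB\<^esub> y \<in> ee P" if yP: "y \<in> ee P" and xB: "x \<in> carrier BB" for x y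
  proof -
    obtain a u where au: "a \<in> P" "u \<in> SS" "y = cls a u" using yP by blast
    obtain r w where rw: "r \<in> carrier R" "w \<in> SS" "x = cls r w" using BB_rep[OF xB] by blast
    have ac: "a \<in> carrier R" using au(1) Psub by blast
    have "x \<otimes>\<^bsub>BB\<^esub> y = cls (r \<otimes> a) (w \<otimes> u)" unfolding au(3) rw(3) by (rule mult_BB[OF rw(1,2) ac au(2)])
    moreover have "r \<otimes> a \<in> P" by (rule ideal_lm[OF Pi au(1) rw(1)])
    moreover have "w \<otimes> u \<in> SS" by (rule S_mult[OF rw(2) au(2)])
    ultimately show ?thesis by blast
  qed
  have rc: "y \<otimes>\<^bsub>BB\<^esub> x \<in> ee P" if "y \<in> ee P" "x \<in> carrier BB" for x y
  proof -
    have "y \<otimes>\<^bsub>BB\<^esub> x = x \<otimes>\<^bsub>BB\<^esub> y" using cring.cring_simprules(14)[OF cB] that sub by blast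
    then show ?thesis using lc[OF that] by simp
  qed
  have sg: "subgroup (ee P) (add_monoid BB)"
  proof (rule subgroup.intro)
    show "ee P \<subseteq> carrier (add_monoid BB)" using sub by simp
    show "\<And>x y. x \<in> ee P \<Longrightarrow> y \<in> ee P \<Longrightarrow> x \<otimes>\<^bsub>add_monoid BB\<^esub> y \<in> ee P" using addc by simp
    show "\<one>\<^bsub>add_monoid BB\<^esub> \<in> ee P" using zc by simp
    show "\<And>x. x \<in> ee P \<Longrightarrow> inv\<^bsub>add_monoid BB\<^esub> x \<in> ee P" using negc unfolding a_inv_def by simp
  qed
  have Ii: "ideal (ee P) BB" by (rule idealI[OF rB sg]) (use lc rc in blast)+
  show ?thesis
  proof (rule primeidealI[OF Ii cB])
    have "\<one> \<notin> P" by (rule prime_one[OF P(1)])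
    then have "cls \<one> \<one> \<notin> ee P" using ee_mem[OF P one_closed one_S] by simp
    moreover have "cls \<one> \<one> \<in> carrier BB" by (rule cls_carr[OF one_closed one_S])
    ultimately show "carrier BB \<noteq> ee P" by blast
  next
    fix x y assume xy: "x \<in> carrier BB" "y \<in> carrier BB" "x \<otimes>\<^bsub>BB\<^esub> y \<in> ee P"
    obtain a u where au: "a \<in> carrier R" "u \<in> SS" "x = cls a u" using BB_rep[OF xy(1)] by blast
    obtain b v where bv: "b \<in> carrier R" "v \<in> SS" "y = cls b v" using BB_rep[OF xy(2)] by blast
    have "x \<otimes>\<^bsub>BB\<^esub> y = cls (a \<otimes> b) (u \<otimes> v)" unfolding au(3) bv(3) by (rule mult_BB[OF au(1,2) bv(1,2)])
    then have "a \<otimes> b \<in> P" using xy(3) ee_mem[OF P _ S_mult[OF au(2) bv(2)], of "a \<otimes> b"] au(1) bv(1) by simp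
    then have "a \<in> P \<or> b \<in> P" by (rule prime_prime[OF P(1) au(1) bv(1)])
    then show "x \<in> ee P \<or> y \<in> ee P" using au bv by blast
  qed
qed

lemma cc_prime:
  assumes p: "primeideal p BB"
  shows "primeideal (cc p) R" "cc p \<inter> SS = {}"
proof -
  have cB: "cring BB" by (rule prime_cring[OF p])
  have rB: "ring BB" using cB cring.axioms(1) by blast
  have pi: "ideal p BB" by (rule prime_ideal[OF p])
  have one_notin: "cls \<one> \<one> \<notin> p" using prime_one[OF p] unfolding one_BB .
  have cls1: "cls a \<one> \<in> carrier BB" if "a \<in> carrier R" for a by (rule cls_carr[OF that one_S])
  have sg: "subgroup (cc p) (add_monoid R)"
  proof (rule subgroup.intro)
    show "cc p \<subseteq> carrier (add_monoid R)" by auto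
    show "x \<otimes>\<^bsub>add_monoid R\<^esub> y \<in> cc p" if "x \<in> cc p" "y \<in> cc p" for x y
    proof -
      have "cls (x \<oplus> y) \<one> = cls x \<one> \<oplus>\<^bsub>BB\<^esub> cls y \<one>" using hom_add that by blast
      also have "\<dots> \<in> p" using ideal_add[OF pi] that by blast
      finally show ?thesis using that by simp
    qed
    show "\<one>\<^bsub>add_monoid R\<^esub> \<in> cc p" using ideal_zero[OF pi] unfolding zero_BB by simp
    show "inv\<^bsub>add_monoid R\<^esub> x \<in> cc p" if "x \<in> cc p" for x
    proof -
      have xc: "x \<in> carrier R" using that by blast
      have "cls (\<ominus> x) \<one> = \<ominus>\<^bsub>BB\<^esub> cls x \<one>" using neg_BB[OF rB xc one_S] by simp
      also have "\<dots> \<in> p" using ideal_neg[OF pi] that by blast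
      finally show ?thesis using xc unfolding a_inv_def[symmetric] by simp
    qed
  qed
  have lc: "x \<otimes> a \<in> cc p" if "a \<in> cc p" "x \<in> carrier R" for a x
  proof -
    have ac: "a \<in> carrier R" using that by blast
    have "cls (x \<otimes> a) \<one> = cls x \<one> \<otimes>\<^bsub>BB\<^esub> cls a \<one>" by (rule hom_mult[OF that(2) ac])
    also have "\<dots> \<in> p" using ideal_lm[OF pi _ cls1[OF that(2)]] that by blast
    finally show ?thesis using that ac by simp
  qed
  have rc: "a \<otimes> x \<in> cc p" if "a \<in> cc p" "x \<in> carrier R" for a x
  proof -
    have ac: "a \<in> carrier R" using that by blast
    have "a \<otimes> x = x \<otimes> a" using ac that(2) m_comm by blast
    then show ?thesis using lc[OF that] by simp
  qed
  have Ii: "ideal (cc p) R" by (rule idealI[OF cring.axioms(1)[OF is_cring] sg]) (use lc rc in blast)+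
  show "primeideal (cc p) R"
  proof (rule primeidealI[OF Ii is_cring])
    show "carrier R \<noteq> cc p" using one_notin by auto
  next
    fix a b assume ab: "a \<in> carrier R" "b \<in> carrier R" "a \<otimes> b \<in> cc p"
    have "cls a \<one> \<otimes>\<^bsub>BB\<^esub> cls b \<one> \<in> p" using hom_mult[OF ab(1,2)] ab(3) by simp
    then have "cls a \<one> \<in> p \<or> cls b \<one> \<in> p" by (rule prime_prime[OF p cls1[OF ab(1)] cls1[OF ab(2)]])
    then show "a \<in> cc p \<or> b \<in> cc p" using ab by blast
  qed
  show "cc p \<inter> SS = {}"
  proof (rule ccontr)
    assume "cc p \<inter> SS \<noteq> {}"
    then obtain u where u: "u \<in> SS" "cls u \<one> \<in> p" by blast
    have "cls u \<one> \<otimes>\<^bsub>BB\<^esub> cls \<one> u \<in> p" by (rule ideal_rm[OF pi u(2) cls_carr[OF one_closed u(1)]])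
    then show False using unit_BB[OF u(1)] one_notin unfolding one_BB by simp
  qed
qed

lemma p_eq:
  assumes p: "primeideal p BB"
  shows "p = ee (cc p)"
proof
  have pi: "ideal p BB" by (rule prime_ideal[OF p])
  show "p \<subseteq> ee (cc p)"
  proof
    fix x assume x: "x \<in> p"
    obtain a u where au: "a \<in> carrier R" "u \<in> SS" "x = cls a u" using BB_rep[OF ideal_carr[OF pi x]] by blast
    have uc: "u \<in> carrier R" using S_carr au(2) .
    have "cls a \<one> = x \<otimes>\<^bsub>BB\<^esub> cls u \<one>" unfolding au(3) by (rule back_BB[OF au(1,2)])
    also have "\<dots> \<in> p" by (rule ideal_rm[OF pi x cls_carr[OF uc one_S]])
    finally have "a \<in> cc p" using au(1) by blast
    then show "x \<in> ee (cc p)" using au(2,3) by blast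
  qed
  show "ee (cc p) \<subseteq> p"
  proof
    fix x assume "x \<in> ee (cc p)"
    then obtain a u where au: "a \<in> carrier R" "cls a \<one> \<in> p" "u \<in> SS" "x = cls a u" by blast
    have "x = cls a \<one> \<otimes>\<^bsub>BB\<^esub> cls \<one> u" unfolding au(4) by (rule split_BB[OF au(1,3)])
    also have "\<dots> \<in> p" by (rule ideal_rm[OF pi au(2) cls_carr[OF one_closed au(3)]])
    finally show "x \<in> p" .
  qed
qed

lemma cc_ee:
  assumes P: "primeideal P R" "P \<inter> SS = {}"
  shows "cc (ee P) = P"
proof -
  have Psub: "P \<subseteq> carrier R" by (rule ideal_sub[OF prime_ideal[OF P(1)]])
  show ?thesis using ee_mem[OF P _ one_S] Psub by blast
qed

lemma J_sub:
  assumes J: "ideal J BB" and Q: "primeideal Q R" "Q \<inter> SS = {}" "cc J \<subseteq> Q"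
  shows "J \<subseteq> ee Q"
proof
  fix x assume x: "x \<in> J"
  obtain a u where au: "a \<in> carrier R" "u \<in> SS" "x = cls a u" using BB_rep[OF ideal_carr[OF J x]] by blast
  have uc: "u \<in> carrier R" using S_carr au(2) .
  have "cls a \<one> = x \<otimes>\<^bsub>BB\<^esub> cls u \<one>" unfolding au(3) by (rule back_BB[OF au(1,2)])
  also have "\<dots> \<in> J" by (rule ideal_rm[OF J x cls_carr[OF uc one_S]])
  finally have "a \<in> Q" using au(1) Q(3) by blast
  then show "x \<in> ee Q" using au(2,3) by blast
qed

end


definition chain_of :: "('a, 'm) ring_scheme \<Rightarrow> nat \<Rightarrow> (nat \<Rightarrow> 'a set) \<Rightarrow> bool" where
  "chain_of R n c \<longleftrightarrow> (\<forall>i\<le>n. c i \<in> Spec R) \<and> (\<forall>i<n. c i \<subset> c (Suc i))"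

definition chainP :: "('a, 'm) ring_scheme \<Rightarrow> 'a set \<Rightarrow> nat \<Rightarrow> bool" where
  "chainP R K n \<longleftrightarrow> (\<exists>c. chain_of R n c \<and> K \<subseteq> c 0)"

definition dA :: "('a, 'm) ring_scheme \<Rightarrow> nat \<Rightarrow> 'a set \<Rightarrow> nat" where
  "dA R d K = Max {n. n \<le> d \<and> chainP R K n}"

lemma chain_bound:
  assumes "krull_dim R = enat d" "chain_of R n c"
  shows "n \<le> d"
proof -
  have "n \<in> {n. \<exists>c :: nat \<Rightarrow> _. (\<forall>i\<le>n. c i \<in> Spec R) \<and> (\<forall>i<n. c i \<subset> c (Suc i))}"
    using assms(2) unfolding chain_of_def by blast
  then have "enat n \<le> krull_dim R" unfolding krull_dim_def by (rule SUP_upper)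
  then show ?thesis using assms(1) by simp
qed

lemma chainP_bound: "krull_dim R = enat d \<Longrightarrow> chainP R K n \<Longrightarrow> n \<le> d"
  unfolding chainP_def using chain_bound by blast

lemma dA_max:
  assumes "krull_dim R = enat d" "chainP R K n"
  shows "n \<le> dA R d K"
proof -
  have "finite {n. n \<le> d \<and> chainP R K n}" by (rule finite_subset[of _ "{..d}"]) auto
  moreover have "n \<in> {n. n \<le> d \<and> chainP R K n}" using assms chainP_bound by blast
  ultimately show ?thesis unfolding dA_def by (rule Max_ge)
qed

lemma dA_chain:
  assumes "K \<in> Spec R"
  shows "chainP R K (dA R d K)" "dA R d K \<le> d"
proof -
  have "chain_of R 0 (\<lambda>_. K)" unfolding chain_of_def using assms by simp
  then have "chainP R K 0" unfolding chainP_def by blast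
  then have ne: "{n. n \<le> d \<and> chainP R K n} \<noteq> {}" by blast
  have fin: "finite {n. n \<le> d \<and> chainP R K n}" by (rule finite_subset[of _ "{..d}"]) auto
  have "dA R d K \<in> {n. n \<le> d \<and> chainP R K n}" unfolding dA_def by (rule Max_in[OF fin ne])
  then show "chainP R K (dA R d K)" "dA R d K \<le> d" by auto
qed

lemma prepend:
  assumes "chain_of R n c" "Q \<in> Spec R" "Q \<subset> c 0"
  shows "chain_of R (Suc n) (case_nat Q c)"
  unfolding chain_of_def
proof (intro conjI allI impI)
  fix i assume "i \<le> Suc n"
  then show "case_nat Q c i \<in> Spec R" using assms(1,2) unfolding chain_of_def by (cases i) auto
next
  fix i assume "i < Suc n"
  then show "case_nat Q c i \<subset> case_nat Q c (Suc i)" using assms(1,3) unfolding chain_of_def by (cases i) auto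
qed

lemma dA_strict:
  assumes kd: "krull_dim R = enat d" and Q: "Q \<in> Spec R" and P: "P \<in> Spec R" and QP: "Q \<subset> P"
  shows "dA R d P < dA R d Q"
proof -
  obtain c where c: "chain_of R (dA R d P) c" "P \<subseteq> c 0"
    using dA_chain(1)[OF P] unfolding chainP_def by blast
  have "chain_of R (Suc (dA R d P)) (case_nat Q c)" by (rule prepend[OF c(1) Q]) (use QP c(2) in blast)
  then have "chainP R Q (Suc (dA R d P))" unfolding chainP_def by force
  then have "Suc (dA R d P) \<le> dA R d Q" by (rule dA_max[OF kd])
  then show ?thesis by simp
qed

lemma (in ncr) below_prime:
  assumes nzd: "non_zero_divisor R s" and P: "primeideal P R"
  shows "\<exists>Q. primeideal Q R \<and> Q \<subseteq> P \<and> s \<notin> Q"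
proof -
  have sc: "s \<in> carrier R" and nz: "\<And>a. a \<in> carrier R \<Longrightarrow> s \<otimes> a = \<zero> \<Longrightarrow> a = \<zero>"
    using nzd unfolding non_zero_divisor_def by auto
  have Pi: "ideal P R" by (rule prime_ideal[OF P])
  define T where "T = {t \<otimes> s [^] (n::nat) | t n. t \<in> carrier R - P}"
  have Tc: "T \<subseteq> carrier R" unfolding T_def using sc by auto
  have oneP: "\<one> \<notin> P" by (rule prime_one[OF P])
  have "\<one> = \<one> \<otimes> s [^] (0::nat)" by simp
  then have T1: "\<one> \<in> T" unfolding T_def using oneP by blast
  have Tm: "x \<otimes> y \<in> T" if xT: "x \<in> T" and yT: "y \<in> T" for x y
  proof -
    obtain t n where tn: "t \<in> carrier R" "t \<notin> P" "x = t \<otimes> s [^] (n::nat)" using xT unfolding T_def by blast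
    obtain t' m where tm: "t' \<in> carrier R" "t' \<notin> P" "y = t' \<otimes> s [^] (m::nat)" using yT unfolding T_def by blast
    have pc: "s [^] n \<in> carrier R" "s [^] m \<in> carrier R" using sc by auto
    have "x \<otimes> y = (t \<otimes> t') \<otimes> (s [^] n \<otimes> s [^] m)" unfolding tn(3) tm(3) using pc tn(1) tm(1) by algebra
    also have "s [^] n \<otimes> s [^] m = s [^] (n + m)" using nat_pow_mult sc by blast
    finally have e: "x \<otimes> y = (t \<otimes> t') \<otimes> s [^] (n + m)" .
    have "t \<otimes> t' \<notin> P" using prime_prime[OF P tn(1) tm(1)] tn(2) tm(2) by blast
    moreover have "t \<otimes> t' \<in> carrier R" using tn(1) tm(1) by simp
    ultimately show ?thesis unfolding T_def e by blast
  qed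
  have zero_cancel: "t \<otimes> s [^] (n::nat) = \<zero> \<Longrightarrow> t = \<zero>" if "t \<in> carrier R" for t n
  proof (induction n)
    case 0 then show ?case using that by simp
  next
    case (Suc n)
    have pc: "s [^] n \<in> carrier R" using sc by simp
    have "s \<otimes> (t \<otimes> s [^] n) = t \<otimes> s [^] Suc n" using pc sc that by (simp add: m_ac)
    then have "s \<otimes> (t \<otimes> s [^] n) = \<zero>" using Suc.prems by simp
    then have "t \<otimes> s [^] n = \<zero>" using nz pc that by simp
    then show ?case by (rule Suc.IH)
  qed
  have dis: "{\<zero>} \<inter> T = {}"
  proof (rule ccontr)
    assume "{\<zero>} \<inter> T \<noteq> {}"
    then obtain t n where "t \<in> carrier R" "t \<notin> P" "\<zero> = t \<otimes> s [^] (n::nat)" unfolding T_def by blast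
    then have "t = \<zero>" using zero_cancel by metis
    then show False using \<open>t \<notin> P\<close> ideal_zero[OF Pi] by simp
  qed
  obtain Q where Q: "primeideal Q R" "{\<zero>} \<subseteq> Q" "Q \<inter> T = {}"
    using prime_avoid[OF zeroideal Tc T1 Tm dis] by blast
  have Qi: "ideal Q R" by (rule prime_ideal[OF Q(1)])
  have "Q \<subseteq> P"
  proof
    fix x assume x: "x \<in> Q"
    have xc: "x \<in> carrier R" by (rule ideal_carr[OF Qi x])
    show "x \<in> P"
    proof (rule ccontr)
      assume "x \<notin> P"
      have "x = x \<otimes> s [^] (0::nat)" using xc by simp
      then have "x \<in> T" unfolding T_def using xc \<open>x \<notin> P\<close> by blast
      then show False using x Q(3) by blast
    qed
  qed
  moreover have "s \<notin> Q"
  proof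
    assume "s \<in> Q"
    have "s = \<one> \<otimes> s [^] (1::nat)" using sc by simp
    then have "s \<in> T" unfolding T_def using oneP by blast
    then show False using \<open>s \<in> Q\<close> Q(3) by blast
  qed
  ultimately show ?thesis using Q(1) by blast
qed

locale mainl = locs R s + ncr R for R (structure) and s +
  fixes d :: nat
  assumes kd: "krull_dim R = enat d" and nzd: "non_zero_divisor R s"
begin

lemma up_prime:
  assumes P: "primeideal P R" "P \<inter> SS = {}"
  shows "\<exists>Q. primeideal Q R \<and> P \<subseteq> Q \<and> s \<in> Q"
proof -
  have Pi: "ideal P R" by (rule prime_ideal[OF P(1)])
  let ?I = "set_add R P (PIdl s)"
  have "?I \<inter> {\<one>} = {}"
  proof (rule ccontr)
    assume "?I \<inter> {\<one>} \<noteq> {}"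
    then have "\<one> \<in> ?I" by blast
    then obtain i r where ir: "i \<in> P" "r \<in> carrier R" "\<one> = i \<oplus> r \<otimes> s"
      using ideal_plus_elem(4)[OF Pi s_c] by blast
    have ic: "i \<in> carrier R" by (rule ideal_carr[OF Pi ir(1)])
    have "i = \<one> \<oplus> s \<otimes> (\<ominus> r)" using ir(2,3) ic s_c by algebra
    moreover have "\<ominus> r \<in> carrier R" using ir(2) by simp
    ultimately have "i \<in> SS" unfolding S_iff by blast
    then show False using ir(1) P(2) by blast
  qed
  then obtain Q where Q: "primeideal Q R" "?I \<subseteq> Q"
    using prime_avoid[OF ideal_plus_elem(1)[OF Pi s_c], of "{\<one>}"] by auto
  then show ?thesis using ideal_plus_elem(2,3)[OF Pi s_c] by blast
qed

lemma gen_bound: "gen_dim BB \<le> enat (d - 1)"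
proof -
  define \<delta> where "\<delta> p = (if s \<in> cc p then dA R d (cc p) else dA R d (cc p) - 1)" for p
  have dT: "\<delta> p = dA R d (cc p)" if "s \<in> cc p" for p
    unfolding \<delta>_def using that by (rule if_P)
  have dF: "\<delta> p = dA R d (cc p) - 1" if "s \<notin> cc p" for p
    unfolding \<delta>_def using that by (rule if_not_P)
  have sp: "primeideal (cc p) R" "cc p \<inter> SS = {}" "cc p \<in> Spec R" if "p \<in> Spec BB" for p
    using cc_prime[of p] that unfolding Spec_def by auto
  have one_le: "1 \<le> dA R d P" if P: "primeideal P R" "P \<inter> SS = {}" "s \<notin> P" for P
  proof -
    obtain Q where Q: "primeideal Q R" "P \<subseteq> Q" "s \<in> Q" using up_prime[OF P(1,2)] by blast
    have "chain_of R 1 (\<lambda>i. if i = 0 then P else Q)"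
      unfolding chain_of_def Spec_def using P Q by auto
    then have "chainP R P 1" unfolding chainP_def by force
    then show ?thesis by (rule dA_max[OF kd])
  qed
  have bound: "\<delta> p \<le> d - 1" if p: "p \<in> Spec BB" for p
  proof (cases "s \<in> cc p")
    case True
    obtain c where c: "chain_of R (dA R d (cc p)) c" "cc p \<subseteq> c 0"
      using dA_chain(1)[OF sp(3)[OF p]] unfolding chainP_def by blast
    have "c 0 \<in> Spec R" using c(1) unfolding chain_of_def by simp
    then obtain Q where Q: "primeideal Q R" "Q \<subseteq> c 0" "s \<notin> Q"
      using below_prime[OF nzd] unfolding Spec_def by blast
    have "Q \<subset> c 0" using Q(2,3) True c(2) by blast
    then have "chain_of R (Suc (dA R d (cc p))) (case_nat Q c)"
      using prepend[OF c(1)] Q(1) unfolding Spec_def by blast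
    then have "Suc (dA R d (cc p)) \<le> d" by (rule chain_bound[OF kd])
    then show ?thesis using dT[OF True] by simp
  next
    case False
    have "dA R d (cc p) \<le> d" by (rule dA_chain(2)[OF sp(3)[OF p]])
    then show ?thesis using dF[OF False] by simp
  qed
  have gdf: "gen_dim_fun BB \<delta>"
    unfolding gen_dim_fun_def
  proof (intro allI impI)
    fix J assume J: "ideal J BB"
    define MM where "MM = gd_minimal \<delta> (V_set BB J)"
    have Jsub: "cc J \<subseteq> carrier R" by blast
    have MM_spec: "p \<in> Spec BB" "J \<subseteq> p" "\<not> (\<exists>q\<in>V_set BB J. gd_less \<delta> q p)" if "p \<in> MM" for p
      using that unfolding MM_def gd_minimal_def V_set_def by auto
    have inj: "inj_on cc MM"
    proof (rule inj_onI)
      fix p q assume pq: "p \<in> MM" "q \<in> MM" "cc p = cc q"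
      have "p = ee (cc p)" using p_eq MM_spec(1)[OF pq(1)] unfolding Spec_def by blast
      also have "\<dots> = ee (cc q)" using pq(3) by simp
      also have "\<dots> = q" using p_eq MM_spec(1)[OF pq(2)] unfolding Spec_def by blast
      finally show "p = q" .
    qed
    have down: "\<exists>q\<in>V_set BB J. q \<subset> p \<and> cc q = Q"
      if p: "p \<in> MM" and Q: "primeideal Q R" "cc J \<subseteq> Q" "Q \<subseteq> cc p" "Q \<noteq> cc p" for p Q
    proof -
      have pp: "primeideal p BB" using MM_spec(1)[OF p] unfolding Spec_def by blast
      have cB: "cring BB" by (rule prime_cring[OF pp])
      have Qd: "Q \<inter> SS = {}" using Q(3) sp(2)[OF MM_spec(1)[OF p]] by blast
      have qp: "primeideal (ee Q) BB" by (rule ee_prime[OF cB Q(1) Qd])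
      have Jq: "J \<subseteq> ee Q" by (rule J_sub[OF J Q(1) Qd Q(2)])
      have ccq: "cc (ee Q) = Q" by (rule cc_ee[OF Q(1) Qd])
      have "ee Q \<subseteq> ee (cc p)" using Q(3) by blast
      also have "ee (cc p) = p" using p_eq[OF pp] by simp
      finally have "ee Q \<subseteq> p" .
      moreover have "ee Q \<noteq> p" using ccq Q(4) by auto
      ultimately have "ee Q \<subset> p" by blast
      moreover have "ee Q \<in> V_set BB J" unfolding V_set_def Spec_def using qp Jq by blast
      ultimately show ?thesis using ccq by blast
    qed
    have img: "cc ` MM \<subseteq> minP R (cc J) \<union> minP R (insert s (cc J))"
    proof
      fix P assume "P \<in> cc ` MM"
      then obtain p where p: "p \<in> MM" "P = cc p" by blast
      have Pp: "primeideal P R" "P \<inter> SS = {}" "P \<in> Spec R" using sp[OF MM_spec(1)[OF p(1)]] p(2) by auto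
      have JP: "cc J \<subseteq> P" using MM_spec(2)[OF p(1)] p(2) by blast
      show "P \<in> minP R (cc J) \<union> minP R (insert s (cc J))"
      proof (cases "s \<in> P")
        case True
        have "P \<in> minP R (insert s (cc J))"
          unfolding minP_def
        proof (intro CollectI conjI allI impI)
          show "primeideal P R" by (rule Pp(1))
          show "insert s (cc J) \<subseteq> P" using True JP by blast
          fix Q assume Q: "primeideal Q R \<and> insert s (cc J) \<subseteq> Q \<and> Q \<subseteq> P"
          show "Q = P"
          proof (rule ccontr)
            assume ne: "Q \<noteq> P"
            obtain q where q: "q \<in> V_set BB J" "q \<subset> p" "cc q = Q"
              using down[OF p(1), of Q] Q ne p(2) by blast
            have sQ: "s \<in> Q" using Q by blast
            have "dA R d P < dA R d Q"
              by (rule dA_strict[OF kd]) (use Q ne Pp(3) in \<open>auto simp: Spec_def\<close>)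
            moreover have "s \<in> cc q" by (subst q(3)) (rule sQ)
            moreover have "s \<in> cc p" by (subst p(2)[symmetric]) (rule True)
            ultimately have "\<delta> p < \<delta> q" using dT[of p] dT[of q] p(2) q(3) by metis
            then have "gd_less \<delta> q p" unfolding gd_less_def using q(2) by blast
            then show False using MM_spec(3)[OF p(1)] q(1) by blast
          qed
        qed
        then show ?thesis by blast
      next
        case False
        have "P \<in> minP R (cc J)"
          unfolding minP_def
        proof (intro CollectI conjI allI impI)
          show "primeideal P R" by (rule Pp(1))
          show "cc J \<subseteq> P" by (rule JP)
          fix Q assume Q: "primeideal Q R \<and> cc J \<subseteq> Q \<and> Q \<subseteq> P"
          show "Q = P"
          proof (rule ccontr)
            assume ne: "Q \<noteq> P"
            obtain q where q: "q \<in> V_set BB J" "q \<subset> p" "cc q = Q"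
              using down[OF p(1), of Q] Q ne p(2) by blast
            have sQ: "s \<notin> Q" using Q False by blast
            have "dA R d P < dA R d Q"
              by (rule dA_strict[OF kd]) (use Q ne Pp(3) in \<open>auto simp: Spec_def\<close>)
            moreover have "1 \<le> dA R d P" by (rule one_le[OF Pp(1,2) False])
            moreover have "s \<notin> cc q" by (subst q(3)) (rule sQ)
            moreover have "s \<notin> cc p" by (subst p(2)[symmetric]) (rule False)
            ultimately have "\<delta> p < \<delta> q" using dF[of p] dF[of q] p(2) q(3) by (metis diff_less_mono)
            then have "gd_less \<delta> q p" unfolding gd_less_def using q(2) by blast
            then show False using MM_spec(3)[OF p(1)] q(1) by blast
          qed
        qed
        then show ?thesis by blast
      qed
    qed
    have "finite (minP R (cc J) \<union> minP R (insert s (cc J)))"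
      using finite_minP[OF Jsub] finite_minP[of "insert s (cc J)"] Jsub s_c by blast
    then have "finite (cc ` MM)" using img finite_subset by blast
    then show "finite MM" using finite_imageD inj by blast
  qed
  have "gen_dim BB \<le> (SUP p\<in>Spec BB. enat (\<delta> p))"
    unfolding gen_dim_def by (rule INF_lower) (use gdf in simp)
  also have "\<dots> \<le> enat (d - 1)"
    by (rule SUP_least) (use bound in simp)
  finally show ?thesis .
qed

end

theorem lemma3p2:
  fixes A :: "('a, 'm) ring_scheme" and s :: 'a and d :: nat
  assumes "cring A" and "noetherian_ring A"
    and "krull_dim A = enat d" and "d \<ge> 1"
    and "non_zero_divisor A s"
  shows "gen_dim (localization A (one_plus A s)) \<le> enat (d - 1)"
proof -
  have sc: "s \<in> carrier A" using assms(5) unfolding non_zero_divisor_def by blast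
  interpret mainl A s d
    by (intro mainl.intro locs.intro ncr.intro mainl_axioms.intro locs_axioms.intro) (use assms sc in auto)
  show ?thesis by (rule gen_bound)
qed

end
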